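(* Let $H$, $L$ be as in the context and let $(S,\mathcal T_0)$ be a feasible solution. Then $\omega(H_{\mathcal T_0})=\max\{\omega_j(H_{\mathcal T_0}): j\in[NZ),\ j\bmod Z<LS\}$.
   Context: Notation: $[n)=\{0,1,\dots,n-1\}$. Let $M,N,Z$ be positive integers and let $H$ be a binary $MZ\times NZ$ matrix made of $M\times N$ blocks, each a $Z\times Z$ circulant (row $i$ of a block is the cyclic right shift by $i$ of its row $0$); assume $H$ has no zero row and no two identical rows. For $\mathcal A\subseteq[MZ)$, $H_{\mathcal A}$ is the submatrix of rows indexed by $\mathcal A$. $\omega_j(A)$ is the Hamming weight of column $j$ of $A$ and $\omega(A)=\max_j\omega_j(A)$. For $i\in[MZ)$ and integer $s$, $\pi^s(i)=Z\lfloor i/Z\rfloor+((i+s)\bmod Z)$ and $\pi^s(\mathcal T)=\{\pi^s(x):x\in\mathcal T\}$. Fix an integer $L>1$. A pair $(S,\mathcal T_0)$ ($S$ a positive integer, $\mathcal T_0\subseteq[MZ)$) is a feasible solution if, with $\mathcal T_l=\pi^{lS}(\mathcal T_0)$ for $l\in[L)$, the sets $\mathcal T_0,\dots,\mathcal T_{L-1}$ are pairwise disjoint with union $[MZ)$. *)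

theory Defs
  imports Main
begin

text \<open>A binary MZ x NZ matrix is represented as H :: nat => nat => bool,
  where H i j is the entry in row i, column j (only i < M*Z, j < N*Z matter).\<close>

definition qc_matrix :: "nat \<Rightarrow> nat \<Rightarrow> nat \<Rightarrow> (nat \<Rightarrow> nat \<Rightarrow> bool) \<Rightarrow> bool" where
  "qc_matrix M N Z H \<longleftrightarrow>
     (\<forall>i < M*Z. \<forall>j < N*Z.
        H i j = H (Z * (i div Z)) (Z * (j div Z) + ((j mod Z + Z - i mod Z) mod Z)))"

definition no_zero_row :: "nat \<Rightarrow> nat \<Rightarrow> nat \<Rightarrow> (nat \<Rightarrow> nat \<Rightarrow> bool) \<Rightarrow> bool" where
  "no_zero_row M N Z H \<longleftrightarrow> (\<forall>i < M*Z. \<exists>j < N*Z. H i j)"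

definition distinct_rows :: "nat \<Rightarrow> nat \<Rightarrow> nat \<Rightarrow> (nat \<Rightarrow> nat \<Rightarrow> bool) \<Rightarrow> bool" where
  "distinct_rows M N Z H \<longleftrightarrow>
     (\<forall>i1 < M*Z. \<forall>i2 < M*Z. i1 \<noteq> i2 \<longrightarrow> (\<exists>j < N*Z. H i1 j \<noteq> H i2 j))"

definition perm_pi :: "nat \<Rightarrow> nat \<Rightarrow> nat \<Rightarrow> nat" where
  "perm_pi Z s i = Z * (i div Z) + ((i + s) mod Z)"

definition feasible :: "nat \<Rightarrow> nat \<Rightarrow> nat \<Rightarrow> nat \<Rightarrow> nat set \<Rightarrow> bool" where
  "feasible M Z L S T0 \<longleftrightarrow>
     S > 0 \<and> T0 \<subseteq> {..<M*Z} \<and>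
     (\<forall>l1 < L. \<forall>l2 < L. l1 \<noteq> l2 \<longrightarrow>
        perm_pi Z (l1*S) ` T0 \<inter> perm_pi Z (l2*S) ` T0 = {}) \<and>
     (\<Union>l<L. perm_pi Z (l*S) ` T0) = {..<M*Z}"

definition col_weight :: "(nat \<Rightarrow> nat \<Rightarrow> bool) \<Rightarrow> nat set \<Rightarrow> nat \<Rightarrow> nat" where
  "col_weight H A j = card {i \<in> A. H i j}"

definition max_col_weight :: "nat \<Rightarrow> nat \<Rightarrow> (nat \<Rightarrow> nat \<Rightarrow> bool) \<Rightarrow> nat set \<Rightarrow> nat" where
  "max_col_weight N Z H A = Max (col_weight H A ` {..<N*Z})"

end

theory Submission
  imports Defs
begin

lemma pi_div: "(Z::nat)>0 \<Longrightarrow> perm_pi Z s i div Z = i div Z"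
  unfolding perm_pi_def by simp
lemma pi_mod: "(Z::nat)>0 \<Longrightarrow> perm_pi Z s i mod Z = (i+s) mod Z"
  unfolding perm_pi_def by simp
lemma pi_comp: "(Z::nat)>0 \<Longrightarrow> perm_pi Z a (perm_pi Z b x) = perm_pi Z (a+b) x"
proof -
  assume Z: "Z>0"
  have "(Z * (x div Z) + (x + b) mod Z + a) mod Z = ((x + b) mod Z + a) mod Z"
    by (metis add.assoc mod_mult_self3 mult.commute)
  also have "\<dots> = (x + (a + b)) mod Z" by (simp add: mod_simps ac_simps)
  finally show ?thesis unfolding perm_pi_def using Z by (simp add: ac_simps)
qed
lemma pi_inj: "(Z::nat)>0 \<Longrightarrow> inj (perm_pi Z s)"
proof (rule injI)
  fix x y assume Z: "Z>0" and e: "perm_pi Z s x = perm_pi Z s y"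
  have d: "x div Z = y div Z" using pi_div[OF Z, of s x] pi_div[OF Z, of s y] e by simp
  have "(x+s) mod Z = (y+s) mod Z" using pi_mod[OF Z, of s x] pi_mod[OF Z, of s y] e by simp
  hence "(int x + int s) mod int Z = (int y + int s) mod int Z" by (metis of_nat_add of_nat_mod)
  hence "(int x + int s - int s) mod int Z = (int y + int s - int s) mod int Z" by (metis mod_diff_left_eq)
  hence "int x mod int Z = int y mod int Z" by simp
  hence "x mod Z = y mod Z" by (metis of_nat_mod of_nat_eq_iff)
  with d show "x = y" by (metis div_mult_mod_eq)
qed
lemma pi_lt: "(Z::nat)>0 \<Longrightarrow> i < M*Z \<Longrightarrow> perm_pi Z s i < M*Z"
proof -
  assume Z: "Z>0" and i: "i < M*Z"
  have "i div Z < M" using i by (simp add: less_mult_imp_div_less)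
  hence "i div Z + 1 \<le> M" by simp
  hence "Z*(i div Z) + Z \<le> M*Z" by (metis mult.commute distrib_left mult_le_mono1 mult_1_right mult_le_mono2)
  moreover have "(i+s) mod Z < Z" using Z by simp
  ultimately show ?thesis unfolding perm_pi_def by linarith
qed
lemma intmod: "((a::int) mod m + m - b mod m) mod m = (a - b) mod m"
proof -
  have e: "a mod m + m - b mod m = (a mod m - b mod m) + m" by simp
  have "(a mod m + m - b mod m) mod m = ((a mod m - b mod m) + m) mod m" by (simp only: e)
  also have "\<dots> = (a mod m - b mod m) mod m" by (rule mod_add_self2)
  also have "\<dots> = (a - b) mod m" by (simp add: mod_diff_eq)
  finally show ?thesis .
qed

lemma modlem: "(Z::nat)>0 \<Longrightarrow> ((j+s) mod Z + Z - (i+s) mod Z) mod Z = (j mod Z + Z - i mod Z) mod Z"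
proof -
  assume Z: "Z>0"
  have a: "int (((j+s) mod Z + Z - (i+s) mod Z) mod Z) = (int j - int i) mod int Z"
  proof -
    have "(i+s) mod Z < Z" using Z by simp
    hence "int ((j+s) mod Z + Z - (i+s) mod Z) = int ((j+s) mod Z) + int Z - int ((i+s) mod Z)" by linarith
    hence "int (((j+s) mod Z + Z - (i+s) mod Z) mod Z) = (int ((j+s) mod Z) + int Z - int ((i+s) mod Z)) mod int Z"
      by (metis of_nat_mod)
    also have "\<dots> = ((int j + int s) mod int Z + int Z - (int i + int s) mod int Z) mod int Z"
      by (simp add: of_nat_mod)
    also have "\<dots> = (int j + int s - (int i + int s)) mod int Z" by (rule intmod)
    also have "\<dots> = (int j - int i) mod int Z" by simp
    finally show ?thesis .
  qed
  have b: "int ((j mod Z + Z - i mod Z) mod Z) = (int j - int i) mod int Z"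
  proof -
    have "i mod Z < Z" using Z by simp
    hence "int (j mod Z + Z - i mod Z) = int (j mod Z) + int Z - int (i mod Z)" by linarith
    hence "int ((j mod Z + Z - i mod Z) mod Z) = (int (j mod Z) + int Z - int (i mod Z)) mod int Z"
      by (metis of_nat_mod)
    also have "\<dots> = ((int j) mod int Z + int Z - (int i) mod int Z) mod int Z"
      by (simp add: of_nat_mod)
    also have "\<dots> = (int j - int i) mod int Z" by (rule intmod)
    finally show ?thesis .
  qed
  from a b show ?thesis by linarith
qed

lemma H_shift:
  assumes Z: "Z>0" and qc: "qc_matrix M N Z H" and i: "i < M*Z" and j: "j < N*Z"
  shows "H (perm_pi Z s i) (perm_pi Z s j) = H i j"
proof -
  have i': "perm_pi Z s i < M*Z" using pi_lt[OF Z i] .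
  have j': "perm_pi Z s j < N*Z" using pi_lt[OF Z j] .
  show ?thesis
    using qc i j i' j' unfolding qc_matrix_def
    by (metis pi_div[OF Z] pi_mod[OF Z] modlem[OF Z])
qed


theorem theorem4:
  fixes M N Z L S :: nat and H :: "nat \<Rightarrow> nat \<Rightarrow> bool" and T0 :: "nat set"
  assumes "M > 0" and "N > 0" and "Z > 0"
    and "qc_matrix M N Z H"
    and "no_zero_row M N Z H"
    and "distinct_rows M N Z H"
    and "L > 1"
    and "feasible M Z L S T0"
  shows "max_col_weight N Z H T0 =
           Max (col_weight H T0 ` {j. j < N*Z \<and> j mod Z < L*S})"
proof -
  note Z = \<open>Z > 0\<close>
  note qc = \<open>qc_matrix M N Z H\<close>
  have S: "S > 0" and Tsub: "T0 \<subseteq> {..<M*Z}"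
    and disj: "\<And>l1 l2. l1 < L \<Longrightarrow> l2 < L \<Longrightarrow> l1 \<noteq> l2 \<Longrightarrow>
        perm_pi Z (l1*S) ` T0 \<inter> perm_pi Z (l2*S) ` T0 = {}"
    and cov: "(\<Union>l<L. perm_pi Z (l*S) ` T0) = {..<M*Z}"
    using \<open>feasible M Z L S T0\<close> unfolding feasible_def by auto
  have fin: "finite T0" using Tsub finite_subset by blast
  define n where "n = L*S"
  have n0: "n > 0" using S \<open>L > 1\<close> n_def by simp
  have inj: "\<And>s. inj (perm_pi Z s)" using pi_inj[OF Z] .
  have pi0: "\<And>t. perm_pi Z 0 t = t" unfolding perm_pi_def by simp
  have into: "perm_pi Z n x \<in> T0" if x: "x \<in> T0" for x
  proof -
    have "perm_pi Z n x < M*Z" using pi_lt[OF Z] x Tsub by blast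
    then obtain l t where l: "l < L" and t: "t \<in> T0" and e: "perm_pi Z n x = perm_pi Z (l*S) t"
      using cov by blast
    show ?thesis
    proof (cases l)
      case 0 then show ?thesis using e t pi0 by simp
    next
      case (Suc k)
      have "perm_pi Z S (perm_pi Z ((L-1)*S) x) = perm_pi Z n x"
        using pi_comp[OF Z] \<open>L>1\<close> n_def
        by (metis Suc_diff_1 add.commute less_trans mult_Suc zero_less_one)
      also have "\<dots> = perm_pi Z (l*S) t" by (rule e)
      also have "\<dots> = perm_pi Z S (perm_pi Z (k*S) t)" using pi_comp[OF Z] Suc by simp
      finally have "perm_pi Z ((L-1)*S) x = perm_pi Z (k*S) t" using inj by (meson injD)
      hence "perm_pi Z ((L-1)*S) x \<in> perm_pi Z ((L-1)*S) ` T0 \<inter> perm_pi Z (k*S) ` T0"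
        using x t by (metis IntI imageI)
      moreover have "L - 1 \<noteq> k" using Suc l by simp
      ultimately show ?thesis using disj[of "L-1" k] l Suc by auto
    qed
  qed
  have inv: "perm_pi Z n ` T0 = T0"
    by (rule endo_inj_surj[OF fin]) (use into inj in \<open>auto intro: inj_on_subset\<close>)
  have step: "col_weight H T0 j = col_weight H T0 (j - n)"
    if j: "j < N*Z" and jm: "j mod Z \<ge> n" for j
  proof -
    define q r where "q = j div Z" and "r = j mod Z"
    have jq: "j = Z*q + r" using q_def r_def by simp
    have rZ: "r < Z" using Z r_def by simp
    have jn: "j - n = Z*q + (r - n)" using jq jm r_def by simp
    have rn: "r - n < Z" using rZ by simp
    have d: "(Z*q + (r-n)) div Z = q" using rn Z by simp
    have rn2: "r - n + n = r" using jm r_def by simp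
    have "perm_pi Z n (j - n) = Z*q + (Z*q + (r-n) + n) mod Z"
      unfolding perm_pi_def jn d ..
    also have "(Z*q + (r-n) + n) mod Z = r"
      using rn2 rZ by (metis add.assoc mod_less mod_mult_self3 mult.commute)
    finally have pj: "perm_pi Z n (j - n) = j" using jq by simp
    have jl: "j - n < N*Z" using j by simp
    have "{i \<in> T0. H i j} = perm_pi Z n ` {i \<in> T0. H i (j - n)}"
    proof
      show "perm_pi Z n ` {i \<in> T0. H i (j - n)} \<subseteq> {i \<in> T0. H i j}"
      proof
        fix y assume "y \<in> perm_pi Z n ` {i \<in> T0. H i (j - n)}"
        then obtain i where i: "i \<in> T0" "H i (j - n)" and y: "y = perm_pi Z n i" by blast
        have "H y j = H i (j - n)"
          using H_shift[OF Z qc _ jl, of i n] i Tsub y pj by auto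
        thus "y \<in> {i \<in> T0. H i j}" using i y into by auto
      qed
    next
      show "{i \<in> T0. H i j} \<subseteq> perm_pi Z n ` {i \<in> T0. H i (j - n)}"
      proof
        fix y assume y: "y \<in> {i \<in> T0. H i j}"
        then obtain k where k: "k \<in> T0" "y = perm_pi Z n k" using inv by blast
        have "H k (j - n) = H y j"
          using H_shift[OF Z qc _ jl, of k n] k Tsub pj by auto
        thus "y \<in> perm_pi Z n ` {i \<in> T0. H i (j - n)}" using k y by auto
      qed
    qed
    hence "card {i \<in> T0. H i j} = card {i \<in> T0. H i (j - n)}"
      using card_image inj by (metis inj_on_subset subset_UNIV)
    thus ?thesis unfolding col_weight_def .
  qed
  have red: "j < N*Z \<longrightarrow> (\<exists>j'. j' < N*Z \<and> j' mod Z < n \<and> col_weight H T0 j = col_weight H T0 j')" for j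
  proof (induction j rule: less_induct)
    case (less j)
    show ?case
    proof (intro impI)
      assume j: "j < N*Z"
      show "\<exists>j'. j' < N*Z \<and> j' mod Z < n \<and> col_weight H T0 j = col_weight H T0 j'"
      proof (cases "j mod Z < n")
        case True then show ?thesis using j by blast
      next
        case False
        hence jm: "j mod Z \<ge> n" by simp
        have "j - n < j" using n0 jm
          by (metis diff_less less_le_trans mod_less_eq_dividend)
        moreover have "j - n < N*Z" using j by simp
        ultimately obtain j' where "j' < N*Z" "j' mod Z < n" "col_weight H T0 (j-n) = col_weight H T0 j'"
          using less by blast
        then show ?thesis using step[OF j jm] by auto
      qed
    qed
  qed
  have "col_weight H T0 ` {..<N*Z} = col_weight H T0 ` {j. j < N*Z \<and> j mod Z < L*S}"
  proof
    show "col_weight H T0 ` {..<N*Z} \<subseteq> col_weight H T0 ` {j. j < N*Z \<and> j mod Z < L*S}"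
      using red n_def by fastforce
  qed auto
  thus ?thesis unfolding max_col_weight_def by simp
qed

end
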